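(* Let $\rho$ be a compatible objective functional for the uncertainty triplet $(\mathcal G,\mathcal Z,\pi)$ and $X\in\mathcal Z$. (i) Suppose $(\mathcal Z,\pi)=(L^\infty_n,\pi^\infty_n)$. If $\mathcal G_X(\rho)$ contains a continuous function $g:\mathbb R^n\to\mathbb R$ and $\rho$ is $\pi^\infty_1$-continuous, then $\rho$ is robust at $X$ relative to $(\mathcal G,\mathcal Z,\pi)$. (ii) Suppose $(\mathcal Z,\pi)=(L^q_n,\pi^q_n)$, $q\in[1,\infty)$. If $\mathcal G_X(\rho)$ contains a continuous and linearly growing function $g:\mathbb R^n\to\mathbb R$ and $\rho$ is $\pi^q_1$-continuous, then $\rho$ is robust at $X$ relative to $(\mathcal G,\mathcal Z,\pi)$. (iii) Suppose $(\mathcal Z,\pi)=(L^0_n,\pi^W_n)$. If $\mathcal G_X(\rho)$ contains a continuous function $g:\mathbb R^n\to\mathbb R$ and $\rho$ is $\pi^W_1$-continuous, then $\rho$ is robust at $X$ relative to $(\mathcal G,\mathcal Z,\pi)$.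
   Context: Work on an atomless probability space; $L^q_n=(L^q)^n$ etc. For $n$-dimensional random vectors: $\pi^\infty_n(Y,Z)=\mathrm{ess\text{-}sup}|Y-Z|$; $\pi^q_n(Y,Z)=(\mathbb E|Y-Z|^q)^{1/q}$; $\pi^W_n(Y,Z)$ is the Prokhorov distance between the laws of $Y$ and $Z$ ($|\cdot|$ Euclidean norm). A function $g:\mathbb R^n\to\mathbb R$ is linearly growing if for some $C>0$, $|g(y)|\le C|y|$ for all $|y|>1$. $\mathcal G_n$ is the set of measurable functions $\mathbb R^n\to\mathbb R$. An uncertainty triplet $(\mathcal G,\mathcal Z,\pi)$ consists of $\mathcal G\subset\mathcal G_n$ and a pseudo-metric space $(\mathcal Z,\pi)$ of $n$-random vectors. An objective functional $\rho$ is compatible if it maps $\{g(Z):Z\in\mathcal Z,g\in\mathcal G\}$ to $\mathbb R\cup\{+\infty\}$ and $\rho(g(Y))=\rho(g(Z))$ whenever $g\in\mathcal G$ and $\pi(Y,Z)=0$. $\mathcal G_X(\rho)=\{g\in\mathcal G:\rho(g(X))=\inf_{h\in\mathcal G}\rho(h(X))\}$. $\rho$ is robust at $X$ relative to $(\mathcal G,\mathcal Z,\pi)$ if some $g_X\in\mathcal G_X(\rho)$ makes $\mathcal Z\ni Y\mapsto\rho(g_X(Y))$ $\pi$-continuous at $Y=X$. *)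

theory Defs
  imports "HOL-Probability.Probability"
begin

definition atomless :: "'w measure \<Rightarrow> bool" where
  "atomless M \<longleftrightarrow> (\<forall>A\<in>sets M. measure M A > 0 \<longrightarrow>
      (\<exists>B\<in>sets M. B \<subseteq> A \<and> 0 < measure M B \<and> measure M B < measure M A))"

definition Linf :: "'w measure \<Rightarrow> ('w \<Rightarrow> real^'n) set" where
  "Linf M = {Y \<in> borel_measurable M. \<exists>C. AE w in M. norm (Y w) \<le> C}"

definition Lq :: "'w measure \<Rightarrow> real \<Rightarrow> ('w \<Rightarrow> real^'n) set" where
  "Lq M q = {Y \<in> borel_measurable M. integrable M (\<lambda>w. norm (Y w) powr q)}"

definition L0 :: "'w measure \<Rightarrow> ('w \<Rightarrow> real^'n) set" where
  "L0 M = borel_measurable M"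

(* Distances; extended-real valued so that they also make sense (possibly = \<infinity>)
   outside the respective spaces *)
definition pi_inf :: "'w measure \<Rightarrow> ('w \<Rightarrow> real^'n) \<Rightarrow> ('w \<Rightarrow> real^'n) \<Rightarrow> ereal" where
  "pi_inf M Y Z = esssup M (\<lambda>w. ereal (norm (Y w - Z w)))"

definition pi_q :: "'w measure \<Rightarrow> real \<Rightarrow> ('w \<Rightarrow> real^'n) \<Rightarrow> ('w \<Rightarrow> real^'n) \<Rightarrow> ereal" where
  "pi_q M q Y Z =
     (if integrable M (\<lambda>w. norm (Y w - Z w) powr q)
      then ereal ((\<integral>w. norm (Y w - Z w) powr q \<partial>M) powr (1 / q)) else \<infinity>)"

definition eps_nbhd :: "real \<Rightarrow> ('a::metric_space) set \<Rightarrow> 'a set" where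
  "eps_nbhd e A = {x. \<exists>a\<in>A. dist x a < e}"

definition prokhorov :: "('a::metric_space) measure \<Rightarrow> 'a measure \<Rightarrow> ereal" where
  "prokhorov \<mu> \<nu> = Inf {ereal e | e. e > 0 \<and>
      (\<forall>A\<in>sets borel. measure \<mu> A \<le> measure \<nu> (eps_nbhd e A) + e \<and>
                       measure \<nu> A \<le> measure \<mu> (eps_nbhd e A) + e)}"

definition pi_W :: "'w measure \<Rightarrow> ('w \<Rightarrow> real^'n) \<Rightarrow> ('w \<Rightarrow> real^'n) \<Rightarrow> ereal" where
  "pi_W M Y Z = prokhorov (distr M borel Y) (distr M borel Z)"

definition to_vec1 :: "('w \<Rightarrow> real) \<Rightarrow> ('w \<Rightarrow> real^1)" where
  "to_vec1 U = (\<lambda>w. vec (U w))"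

definition pi_inf1 :: "'w measure \<Rightarrow> ('w \<Rightarrow> real) \<Rightarrow> ('w \<Rightarrow> real) \<Rightarrow> ereal" where
  "pi_inf1 M U V = pi_inf M (to_vec1 U) (to_vec1 V)"

definition pi_q1 :: "'w measure \<Rightarrow> real \<Rightarrow> ('w \<Rightarrow> real) \<Rightarrow> ('w \<Rightarrow> real) \<Rightarrow> ereal" where
  "pi_q1 M q U V = pi_q M q (to_vec1 U) (to_vec1 V)"

definition pi_W1 :: "'w measure \<Rightarrow> ('w \<Rightarrow> real) \<Rightarrow> ('w \<Rightarrow> real) \<Rightarrow> ereal" where
  "pi_W1 M U V = pi_W M (to_vec1 U) (to_vec1 V)"

definition linearly_growing :: "('a::real_normed_vector \<Rightarrow> real) \<Rightarrow> bool" where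
  "linearly_growing g \<longleftrightarrow> (\<exists>C>0. \<forall>y. norm y > 1 \<longrightarrow> \<bar>g y\<bar> \<le> C * norm y)"

definition obj_dom :: "('a \<Rightarrow> real) set \<Rightarrow> ('w \<Rightarrow> 'a) set \<Rightarrow> ('w \<Rightarrow> real) set" where
  "obj_dom G Zs = {g \<circ> Z | g Z. g \<in> G \<and> Z \<in> Zs}"

definition compatible ::
  "(('w \<Rightarrow> real) \<Rightarrow> ereal) \<Rightarrow> ('a \<Rightarrow> real) set \<Rightarrow> ('w \<Rightarrow> 'a) set
     \<Rightarrow> (('w \<Rightarrow> 'a) \<Rightarrow> ('w \<Rightarrow> 'a) \<Rightarrow> ereal) \<Rightarrow> bool" where
  "compatible \<rho> G Zs p \<longleftrightarrow>
     (\<forall>U\<in>obj_dom G Zs. \<rho> U \<noteq> -\<infinity>) \<and>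
     (\<forall>g\<in>G. \<forall>Y\<in>Zs. \<forall>Z\<in>Zs. p Y Z = 0 \<longrightarrow> \<rho> (g \<circ> Y) = \<rho> (g \<circ> Z))"

definition optimal_set ::
  "(('w \<Rightarrow> real) \<Rightarrow> ereal) \<Rightarrow> ('a \<Rightarrow> real) set \<Rightarrow> ('w \<Rightarrow> 'a) \<Rightarrow> ('a \<Rightarrow> real) set" where
  "optimal_set \<rho> G X = {g \<in> G. \<rho> (g \<circ> X) = (INF h\<in>G. \<rho> (h \<circ> X))}"

definition pcont_at :: "'b set \<Rightarrow> ('b \<Rightarrow> 'b \<Rightarrow> ereal) \<Rightarrow> ('b \<Rightarrow> ereal) \<Rightarrow> 'b \<Rightarrow> bool" where
  "pcont_at S p F x \<longleftrightarrow>
     (\<forall>T. open T \<and> F x \<in> T \<longrightarrow> (\<exists>\<delta>>0. \<forall>y\<in>S. p x y < ereal \<delta> \<longrightarrow> F y \<in> T))"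

definition robust ::
  "(('w \<Rightarrow> real) \<Rightarrow> ereal) \<Rightarrow> ('a \<Rightarrow> real) set \<Rightarrow> ('w \<Rightarrow> 'a) set
     \<Rightarrow> (('w \<Rightarrow> 'a) \<Rightarrow> ('w \<Rightarrow> 'a) \<Rightarrow> ereal) \<Rightarrow> ('w \<Rightarrow> 'a) \<Rightarrow> bool" where
  "robust \<rho> G Zs p X \<longleftrightarrow>
     (\<exists>gX\<in>optimal_set \<rho> G X. pcont_at Zs p (\<lambda>Y. \<rho> (gX \<circ> Y)) X)"

end

theory Submission
  imports Defs
begin

lemma robust_generic:
  assumes g: "g \<in> optimal_set \<rho> G X" and XZ: "X \<in> Zs"
    and pc: "pcont_at (obj_dom G Zs) p1 \<rho> (g \<circ> X)"
    and tr: "\<And>d. d > 0 \<Longrightarrow> \<exists>d'>0. \<forall>Y\<in>Zs. p X Y < ereal d' \<longrightarrow> p1 (g \<circ> X) (g \<circ> Y) < ereal d"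
  shows "robust \<rho> G Zs p X"
  unfolding robust_def
proof (intro bexI[OF _ g])
  have gG: "g \<in> G" using g by (simp add: optimal_set_def)
  show "pcont_at Zs p (\<lambda>Y. \<rho> (g \<circ> Y)) X"
    unfolding pcont_at_def
  proof (intro allI impI)
    fix T assume T: "open T \<and> \<rho> (g \<circ> X) \<in> T"
    then obtain d where d: "d > 0" and dd: "\<forall>U\<in>obj_dom G Zs. p1 (g \<circ> X) U < ereal d \<longrightarrow> \<rho> U \<in> T"
      using pc unfolding pcont_at_def by blast
    obtain d' where d': "d' > 0" "\<forall>Y\<in>Zs. p X Y < ereal d' \<longrightarrow> p1 (g \<circ> X) (g \<circ> Y) < ereal d"
      using tr[OF d] by blast
    show "\<exists>\<delta>>0. \<forall>y\<in>Zs. p X y < ereal \<delta> \<longrightarrow> \<rho> (g \<circ> y) \<in> T"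
    proof (intro exI[of _ d'] conjI ballI impI)
      fix Y assume Y: "Y \<in> Zs" "p X Y < ereal d'"
      have "g \<circ> Y \<in> obj_dom G Zs" using gG Y by (auto simp: obj_dom_def)
      then show "\<rho> (g \<circ> Y) \<in> T" using dd d' Y by blast
    qed (use d' in auto)
  qed
qed

lemma unif_cont_ball:
  fixes g :: "'a::euclidean_space \<Rightarrow> real"
  assumes "continuous_on UNIV g" "e > 0"
  shows "\<exists>\<eta>>0. \<eta> \<le> 1 \<and> (\<forall>x y. norm x \<le> R \<longrightarrow> dist x y < \<eta> \<longrightarrow> \<bar>g x - g y\<bar> < e)"
proof -
  have "uniformly_continuous_on (cball 0 (R+1)) g"
    by (rule compact_uniformly_continuous) (auto intro: continuous_on_subset[OF assms(1)])
  then obtain d where d: "d > 0" "\<forall>x\<in>cball 0 (R+1). \<forall>y\<in>cball 0 (R+1). dist y x < d \<longrightarrow> dist (g y) (g x) < e"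
    unfolding uniformly_continuous_on_def using assms(2) by blast
  show ?thesis
  proof (intro exI[of _ "min d 1"] conjI allI impI)
    fix x y :: 'a assume xy: "norm x \<le> R" "dist x y < min d 1"
    have "norm y \<le> R + 1" using xy norm_triangle_ineq[of x "y - x"]
      by (simp add: dist_norm norm_minus_commute)
    then show "\<bar>g x - g y\<bar> < e" using d xy by (auto simp: dist_real_def dist_commute)
  qed (use d in auto)
qed

lemma norm_vec1_diff: "norm (vec a - vec b :: real^1) = \<bar>a - b\<bar>"
  by (simp add: norm_real)
lemma cont_inf:
  fixes g :: "real^'n \<Rightarrow> real" and X :: "'w \<Rightarrow> real^'n"
  assumes M: "prob_space M" and X: "X \<in> Linf M" and g: "continuous_on UNIV g" and d: "d > 0"
  shows "\<exists>d'>0. \<forall>Y\<in>Linf M. pi_inf M X Y < ereal d' \<longrightarrow> pi_inf1 M (g \<circ> X) (g \<circ> Y) < ereal d"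
proof -
  obtain C where C: "AE w in M. norm (X w) \<le> C" and Xm: "X \<in> borel_measurable M" using X by (auto simp: Linf_def)
  obtain \<eta> where \<eta>: "\<eta> > 0" "\<forall>x y. norm x \<le> C \<longrightarrow> dist x y < \<eta> \<longrightarrow> \<bar>g x - g y\<bar> < d/2"
    using unif_cont_ball[OF g, of "d/2" C] d by auto
  have gm: "g \<in> borel_measurable borel" using g by (simp add: borel_measurable_continuous_onI)
  show ?thesis
  proof (intro exI[of _ \<eta>] conjI ballI impI)
    fix Y assume Y: "Y \<in> Linf M" "pi_inf M X Y < ereal \<eta>"
    have Ym: "Y \<in> borel_measurable M" using Y by (auto simp: Linf_def)
    have "AE w in M. ereal (norm (X w - Y w)) \<le> pi_inf M X Y"
      unfolding pi_inf_def by (rule esssup_AE)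
    then have ae: "AE w in M. norm (X w - Y w) < \<eta>"
      using Y(2) by (elim eventually_mono) (meson ereal_less_eq(3) less_eq_real_def order.strict_iff_not order_trans)
    have "esssup M (\<lambda>w. ereal \<bar>g (X w) - g (Y w)\<bar>) \<le> ereal (d/2)"
    proof (rule esssup_I)
      show "(\<lambda>w. ereal \<bar>g (X w) - g (Y w)\<bar>) \<in> borel_measurable M"
        using gm Xm Ym by measurable
      show "AE w in M. ereal \<bar>g (X w) - g (Y w)\<bar> \<le> ereal (d/2)"
        using ae C
      proof eventually_elim
        case (elim w)
        then have "\<bar>g (X w) - g (Y w)\<bar> < d/2" using \<eta>(2) by (simp add: dist_norm)
        then show ?case by (simp add: norm_vec1_diff)
      qed
    qed
    also have "\<dots> < ereal d" using d by simp
    finally show "pi_inf1 M (g \<circ> X) (g \<circ> Y) < ereal d"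
      by (simp add: pi_inf1_def pi_inf_def to_vec1_def norm_vec1_diff)
  qed (use \<eta> in auto)
qed
lemma unif_cont_ball':
  fixes h :: "'a::euclidean_space \<Rightarrow> 'b::metric_space"
  assumes "continuous_on UNIV h" "e > 0"
  shows "\<exists>\<eta>>0. \<eta> \<le> 1 \<and> (\<forall>x y. norm x \<le> R \<longrightarrow> dist x y < \<eta> \<longrightarrow> dist (h x) (h y) < e)"
proof -
  have "uniformly_continuous_on (cball 0 (R+1)) h"
    by (rule compact_uniformly_continuous) (auto intro: continuous_on_subset[OF assms(1)])
  then obtain d where d: "d > 0" "\<forall>x\<in>cball 0 (R+1). \<forall>y\<in>cball 0 (R+1). dist y x < d \<longrightarrow> dist (h y) (h x) < e"
    unfolding uniformly_continuous_on_def using assms(2) by blast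
  show ?thesis
  proof (intro exI[of _ "min d 1"] conjI allI impI)
    fix x y :: 'a assume xy: "norm x \<le> R" "dist x y < min d 1"
    have "norm y \<le> R + 1" using xy norm_triangle_ineq[of x "y - x"]
      by (simp add: dist_norm norm_minus_commute)
    then show "dist (h x) (h y) < e" using d xy by (auto simp: dist_commute)
  qed (use d in auto)
qed

lemma tight:
  fixes X :: "'w \<Rightarrow> 'a::euclidean_space"
  assumes M: "prob_space M" and X: "X \<in> borel_measurable M" and e: "e > 0"
  shows "\<exists>R. measure M {w\<in>space M. R < norm (X w)} < e"
proof -
  interpret prob_space M by fact
  define A where "A n = {w\<in>space M. real n < norm (X w)}" for n :: nat
  have "A n \<in> sets M" for n unfolding A_def using X by measurable
  then have As: "range A \<subseteq> sets M" by auto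
  have "decseq A" unfolding A_def decseq_def by auto
  have "(\<Inter>n. A n) = {}"
  proof safe
    fix w assume "w \<in> (\<Inter>n. A n)"
    moreover obtain n where "norm (X w) < real n" using reals_Archimedean2 by blast
    ultimately show "w \<in> {}" unfolding A_def using less_asym by blast
  qed
  then have "(\<lambda>n. measure M (A n)) \<longlonglongrightarrow> 0"
    using finite_Lim_measure_decseq[OF As \<open>decseq A\<close>] by simp
  then have "eventually (\<lambda>n. measure M (A n) < e) sequentially"
    using e by (rule order_tendstoD)
  then obtain n where "measure M (A n) < e" by (meson eventually_sequentially order.refl)
  then show ?thesis unfolding A_def by blast
qed

lemma open_eps_nbhd: "open (eps_nbhd e A)"
proof -
  have "eps_nbhd e A = (\<Union>a\<in>A. ball a e)" by (auto simp: eps_nbhd_def ball_def dist_commute)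
  then show ?thesis by (simp add: open_UN)
qed

lemma cont_W_gen:
  fixes h :: "'a::euclidean_space \<Rightarrow> 'b::metric_space" and X :: "'w \<Rightarrow> 'a"
  assumes M: "prob_space M" and X: "X \<in> borel_measurable M" and h: "continuous_on UNIV h" and d: "d > 0"
  shows "\<exists>d'>0. \<forall>Y\<in>borel_measurable M. prokhorov (distr M borel X) (distr M borel Y) < ereal d' \<longrightarrow>
     prokhorov (distr M borel (\<lambda>w. h (X w))) (distr M borel (\<lambda>w. h (Y w))) < ereal d"
proof -
  interpret prob_space M by fact
  have hm: "h \<in> borel_measurable borel" using h by (simp add: borel_measurable_continuous_onI)
  obtain R where R: "measure M {w\<in>space M. R < norm (X w)} < d/4"
    using tight[OF M X, of "d/4"] d by auto
  have Rs: "{w\<in>space M. R < norm (X w)} \<in> sets M" using X by measurable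
  obtain \<eta> where \<eta>: "\<eta> > 0" "\<forall>x y. norm x \<le> R \<longrightarrow> dist x y < \<eta> \<longrightarrow> dist (h x) (h y) < d/4"
    using unif_cont_ball'[OF h, of "d/4" R] d by auto
  show ?thesis
  proof (intro exI[of _ "min \<eta> (d/4)"] conjI ballI impI)
    fix Y assume Ym: "Y \<in> borel_measurable M"
      and P: "prokhorov (distr M borel X) (distr M borel Y) < ereal (min \<eta> (d/4))"
    obtain e where e: "e > 0" "e < min \<eta> (d/4)" and
      Pe: "\<forall>A\<in>sets borel. measure (distr M borel X) A \<le> measure (distr M borel Y) (eps_nbhd e A) + e \<and>
                       measure (distr M borel Y) A \<le> measure (distr M borel X) (eps_nbhd e A) + e"
      using P unfolding prokhorov_def Inf_less_iff by auto
    have hXm: "(\<lambda>w. h (X w)) \<in> borel_measurable M" using hm X by measurable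
    have hYm: "(\<lambda>w. h (Y w)) \<in> borel_measurable M" using hm Ym by measurable
    have Q: "measure (distr M borel (\<lambda>w. h (X w))) B \<le> measure (distr M borel (\<lambda>w. h (Y w))) (eps_nbhd (d/2) B) + d/2 \<and>
             measure (distr M borel (\<lambda>w. h (Y w))) B \<le> measure (distr M borel (\<lambda>w. h (X w))) (eps_nbhd (d/2) B) + d/2"
      if B: "B \<in> sets borel" for B
    proof
      define A1 where "A1 = h -` B \<inter> cball 0 R"
      have hB: "h -` B \<in> sets borel" using measurable_sets[OF hm B] by simp
      have A1: "A1 \<in> sets borel" unfolding A1_def using hB by auto
      have Nb: "eps_nbhd (d/2) B \<in> sets borel" by (simp add: open_eps_nbhd)
      have Ne1: "eps_nbhd e A1 \<in> sets borel" by (simp add: open_eps_nbhd)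
      have Ne2: "eps_nbhd e (h -` B) \<in> sets borel" by (simp add: open_eps_nbhd)
      have s1: "(\<lambda>w. h (X w)) -` B \<inter> space M \<subseteq> (X -` A1 \<inter> space M) \<union> {w\<in>space M. R < norm (X w)}"
        unfolding A1_def by auto
      have s2: "Y -` eps_nbhd e A1 \<inter> space M \<subseteq> (\<lambda>w. h (Y w)) -` eps_nbhd (d/2) B \<inter> space M"
      proof
        fix w assume "w \<in> Y -` eps_nbhd e A1 \<inter> space M"
        then obtain a where a: "a \<in> A1" "dist (Y w) a < e" "w \<in> space M" by (auto simp: eps_nbhd_def)
        then have "dist (h a) (h (Y w)) < d/4" using \<eta> e by (auto simp: A1_def dist_commute)
        then have "dist (h (Y w)) (h a) < d/2" using d by (simp add: dist_commute)
        then show "w \<in> (\<lambda>w. h (Y w)) -` eps_nbhd (d/2) B \<inter> space M"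
          using a by (auto simp: eps_nbhd_def A1_def)
      qed
      have s3: "X -` eps_nbhd e (h -` B) \<inter> space M \<subseteq> ((\<lambda>w. h (X w)) -` eps_nbhd (d/2) B \<inter> space M) \<union> {w\<in>space M. R < norm (X w)}"
      proof
        fix w assume w: "w \<in> X -` eps_nbhd e (h -` B) \<inter> space M"
        show "w \<in> ((\<lambda>w. h (X w)) -` eps_nbhd (d/2) B \<inter> space M) \<union> {w\<in>space M. R < norm (X w)}"
        proof (cases "norm (X w) \<le> R")
          case True
          obtain a where a: "h a \<in> B" "dist (X w) a < e" "w \<in> space M" using w by (auto simp: eps_nbhd_def)
          then have "dist (h (X w)) (h a) < d/4" using \<eta> e True by auto
          then have "dist (h (X w)) (h a) < d/2" using d by simp
          then show ?thesis using a by (auto simp: eps_nbhd_def)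
        qed (use w in auto)
      qed
      show "measure (distr M borel (\<lambda>w. h (X w))) B \<le> measure (distr M borel (\<lambda>w. h (Y w))) (eps_nbhd (d/2) B) + d/2"
      proof -
        have "measure (distr M borel (\<lambda>w. h (X w))) B = measure M ((\<lambda>w. h (X w)) -` B \<inter> space M)"
          using hXm B by (simp add: measure_distr)
        also have "\<dots> \<le> measure M ((X -` A1 \<inter> space M) \<union> {w\<in>space M. R < norm (X w)})"
          using s1 X A1 Rs by (intro finite_measure_mono) (auto intro: measurable_sets)
        also have "\<dots> \<le> measure M (X -` A1 \<inter> space M) + measure M {w\<in>space M. R < norm (X w)}"
          using X A1 Rs by (intro measure_Un_le) (auto intro: measurable_sets)
        also have "measure M (X -` A1 \<inter> space M) = measure (distr M borel X) A1"
          using X A1 by (simp add: measure_distr)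
        also have "\<dots> \<le> measure (distr M borel Y) (eps_nbhd e A1) + e" using Pe A1 by blast
        also have "measure (distr M borel Y) (eps_nbhd e A1) = measure M (Y -` eps_nbhd e A1 \<inter> space M)"
          using Ym Ne1 by (simp add: measure_distr)
        also have "\<dots> \<le> measure M ((\<lambda>w. h (Y w)) -` eps_nbhd (d/2) B \<inter> space M)"
          using s2 hYm Nb by (intro finite_measure_mono) (auto intro: measurable_sets)
        also have "\<dots> = measure (distr M borel (\<lambda>w. h (Y w))) (eps_nbhd (d/2) B)"
          using hYm Nb by (simp add: measure_distr)
        finally show ?thesis using R e by simp
      qed
      show "measure (distr M borel (\<lambda>w. h (Y w))) B \<le> measure (distr M borel (\<lambda>w. h (X w))) (eps_nbhd (d/2) B) + d/2"
      proof -
        have "measure (distr M borel (\<lambda>w. h (Y w))) B = measure M ((\<lambda>w. h (Y w)) -` B \<inter> space M)"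
          using hYm B by (simp add: measure_distr)
        also have "\<dots> = measure M (Y -` (h -` B) \<inter> space M)" by (simp add: vimage_def)
        also have "\<dots> = measure (distr M borel Y) (h -` B)"
          using Ym hB by (simp add: measure_distr)
        also have "\<dots> \<le> measure (distr M borel X) (eps_nbhd e (h -` B)) + e" using Pe hB by blast
        also have "measure (distr M borel X) (eps_nbhd e (h -` B)) = measure M (X -` eps_nbhd e (h -` B) \<inter> space M)"
          using X Ne2 by (simp add: measure_distr)
        also have "\<dots> \<le> measure M (((\<lambda>w. h (X w)) -` eps_nbhd (d/2) B \<inter> space M) \<union> {w\<in>space M. R < norm (X w)})"
          using s3 hXm Nb Rs by (intro finite_measure_mono) (auto intro: measurable_sets)
        also have "\<dots> \<le> measure M ((\<lambda>w. h (X w)) -` eps_nbhd (d/2) B \<inter> space M) + measure M {w\<in>space M. R < norm (X w)}"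
          using hXm Nb Rs by (intro measure_Un_le) (auto intro: measurable_sets)
        also have "measure M ((\<lambda>w. h (X w)) -` eps_nbhd (d/2) B \<inter> space M) = measure (distr M borel (\<lambda>w. h (X w))) (eps_nbhd (d/2) B)"
          using hXm Nb by (simp add: measure_distr)
        finally show ?thesis using R e by simp
      qed
    qed
    have "prokhorov (distr M borel (\<lambda>w. h (X w))) (distr M borel (\<lambda>w. h (Y w))) \<le> ereal (d/2)"
      unfolding prokhorov_def
      by (intro Inf_lower CollectI exI[of _ "d/2"] conjI refl ballI) (use Q d in auto)
    also have "\<dots> < ereal d" using d by simp
    finally show "prokhorov (distr M borel (\<lambda>w. h (X w))) (distr M borel (\<lambda>w. h (Y w))) < ereal d" .
  qed (use \<eta> d in auto)
qed
lemma powr_add_le: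
  fixes a b q :: real
  assumes "a \<ge> 0" "b \<ge> 0" "q > 0"
  shows "(a + b) powr q \<le> 2 powr q * (a powr q + b powr q)"
proof -
  have "(a + b) powr q \<le> (2 * max a b) powr q"
    using assms by (intro powr_mono2) auto
  also have "\<dots> = 2 powr q * max a b powr q" by (simp add: powr_mult)
  also have "max a b powr q \<le> a powr q + b powr q"
    by (cases "a \<le> b") (auto simp: max_def)
  finally show ?thesis by (simp add: mult_left_mono)
qed

lemma tail_int:
  fixes V :: "'w \<Rightarrow> real"
  assumes V: "integrable M V" and nn: "\<And>w. V w \<ge> 0"
  shows "(\<lambda>n::nat. \<integral>w. max (V w - real n) 0 \<partial>M) \<longlonglongrightarrow> 0"
proof -
  have Vm: "V \<in> borel_measurable M" using V by auto
  have "(\<lambda>n::nat. \<integral>w. max (V w - real n) 0 \<partial>M) \<longlonglongrightarrow> (\<integral>w. 0 \<partial>M)"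
  proof (rule integral_dominated_convergence[where w=V])
    show "(\<lambda>w. max (V w - real n) 0) \<in> borel_measurable M" for n using Vm by measurable
    show "AE w in M. (\<lambda>n. max (V w - real n) 0) \<longlonglongrightarrow> 0"
    proof (rule AE_I2)
      fix w
      show "(\<lambda>n. max (V w - real n) 0) \<longlonglongrightarrow> 0"
      proof (rule tendsto_eventually)
        obtain N :: nat where "V w < real N" using reals_Archimedean2 by blast
        then show "eventually (\<lambda>n. max (V w - real n) 0 = 0) sequentially"
          unfolding eventually_sequentially
          by (intro exI[of _ N]) (auto simp: max_def)
      qed
    qed
    show "AE w in M. norm (max (V w - real n) 0) \<le> V w" for n using nn by (auto simp: max_def)
  qed (use V in auto)
  then show ?thesis by simp
qed

lemma cont_q:
  fixes g :: "real^'n \<Rightarrow> real" and X :: "'w \<Rightarrow> real^'n"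
  assumes M: "prob_space M" and q: "1 \<le> q" and X: "X \<in> Lq M q" and g: "continuous_on UNIV g"
    and lg: "linearly_growing g" and d: "d > 0"
  shows "\<exists>d'>0. \<forall>Y\<in>Lq M q. pi_q M q X Y < ereal d' \<longrightarrow> pi_q1 M q (g \<circ> X) (g \<circ> Y) < ereal d"
proof -
  interpret prob_space M by fact
  have q0: "q > 0" using q by simp
  have Xm: "X \<in> borel_measurable M" and Xi: "integrable M (\<lambda>w. norm (X w) powr q)"
    using X by (auto simp: Lq_def)
  have gm: "g \<in> borel_measurable borel" using g by (simp add: borel_measurable_continuous_onI)
  obtain C where C: "C > 0" "\<forall>y. norm y > 1 \<longrightarrow> \<bar>g y\<bar> \<le> C * norm y"
    using lg by (auto simp: linearly_growing_def)
  have "bounded (g ` cball 0 1)"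
    by (intro compact_imp_bounded compact_continuous_image continuous_on_subset[OF g]) auto
  then obtain D0 where D0: "\<forall>z\<in>g ` cball 0 1. norm z \<le> D0" by (auto simp: bounded_iff)
  define D where "D = max D0 0"
  have D: "D \<ge> 0" by (simp add: D_def)
  have gb: "\<bar>g y\<bar> \<le> C * norm y + D" for y
  proof (cases "norm y > 1")
    case True then show ?thesis using C D by force
  next
    case False
    then have "\<bar>g y\<bar> \<le> D0" using D0 by auto
    then show ?thesis using C D unfolding D_def by (smt (verit) mult_nonneg_nonneg norm_ge_zero)
  qed
  define V where "V w = 2 powr q * (2*C*norm (X w) + 2*D) powr q" for w
  have Vnn: "V w \<ge> 0" for w by (simp add: V_def)
  have Vm: "V \<in> borel_measurable M" unfolding V_def using Xm by measurable
  have Vi: "integrable M V"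
  proof (rule Bochner_Integration.integrable_bound)
    show "integrable M (\<lambda>w. 2 powr q * (2 powr q * ((2*C) powr q * norm (X w) powr q + (2*D) powr q)))"
      using Xi by (intro integrable_mult_right integrable_add) auto
    show "AE w in M. norm (V w) \<le> norm (2 powr q * (2 powr q * ((2*C) powr q * norm (X w) powr q + (2*D) powr q)))"
    proof (rule AE_I2)
      fix w
      have "(2*C*norm (X w) + 2*D) powr q \<le> 2 powr q * ((2*C*norm (X w)) powr q + (2*D) powr q)"
        using C D q0 by (intro powr_add_le) auto
      also have "(2*C*norm (X w)) powr q = (2*C) powr q * norm (X w) powr q"
        using C by (simp add: powr_mult)
      finally have "V w \<le> 2 powr q * (2 powr q * ((2*C) powr q * norm (X w) powr q + (2*D) powr q))"
        unfolding V_def by (simp add: mult_left_mono)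
      then show "norm (V w) \<le> norm (2 powr q * (2 powr q * ((2*C) powr q * norm (X w) powr q + (2*D) powr q)))"
        using Vnn[of w] by simp
    qed
  qed (fact Vm)
  define t where "t = d powr q / 4"
  have t: "t > 0" using d by (simp add: t_def)
  obtain K :: nat where K: "(\<integral>w. max (V w - real K) 0 \<partial>M) < t"
    using order_tendstoD(2)[OF tail_int[OF Vi Vnn] t] by (meson eventually_sequentially order.refl)
  obtain R where R: "measure M {w\<in>space M. R < norm (X w)} < t / (real K + 1)"
    using tight[OF M Xm, of "t / (real K + 1)"] t by auto
  have Rs: "{w\<in>space M. R < norm (X w)} \<in> sets M" using Xm by measurable
  obtain \<eta> where \<eta>: "\<eta> > 0" "\<forall>x y. norm x \<le> R \<longrightarrow> dist x y < \<eta> \<longrightarrow> \<bar>g x - g y\<bar> < d/4"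
    using unif_cont_ball[OF g, of "d/4" R] d by auto
  define c where "c = 2 powr q * C powr q + real K / \<eta> powr q"
  have c: "c \<ge> 0" by (simp add: c_def)
  define L where "L = c + 1"
  have L: "L > 0" using c by (simp add: L_def)
  show ?thesis
  proof (intro exI[of _ "(t / L) powr (1/q)"] conjI ballI impI)
    show "(t / L) powr (1/q) > 0" using t L by simp
    fix Y assume Y: "Y \<in> Lq M q" and P: "pi_q M q X Y < ereal ((t / L) powr (1/q))"
    have Ym: "Y \<in> borel_measurable M" using Y by (auto simp: Lq_def)
    have \<Delta>i: "integrable M (\<lambda>w. norm (X w - Y w) powr q)"
      using P by (auto simp: pi_q_def split: if_splits)
    have I: "(\<integral>w. norm (X w - Y w) powr q \<partial>M) powr (1/q) < (t / L) powr (1/q)"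
      using P \<Delta>i by (simp add: pi_q_def)
    have Inn: "(\<integral>w. norm (X w - Y w) powr q \<partial>M) \<ge> 0" by (intro integral_nonneg_AE) auto
    have I2: "(\<integral>w. norm (X w - Y w) powr q \<partial>M) < t / L"
    proof (rule ccontr)
      assume "\<not> ?thesis"
      then have "(t / L) powr (1/q) \<le> (\<integral>w. norm (X w - Y w) powr q \<partial>M) powr (1/q)"
        using t L q0 by (intro powr_mono2) auto
      then show False using I by simp
    qed
    define F where "F w = \<bar>g (X w) - g (Y w)\<bar> powr q" for w
    define B where "B w = (d/4) powr q + max (V w - real K) 0
        + real K * indicator {w\<in>space M. R < norm (X w)} w + c * norm (X w - Y w) powr q" for w
    have FB: "F w \<le> B w" if w: "w \<in> space M" for w
    proof -
      let ?x = "X w" and ?y = "Y w"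
      define \<Delta> where "\<Delta> = norm (?x - ?y)"
      have nn1: "max (V w - real K) 0 \<ge> 0" by simp
      have nn2: "real K * indicator {w\<in>space M. R < norm (X w)} w \<ge> 0" by simp
      have nn3: "c * \<Delta> powr q \<ge> 0" using c by simp
      show ?thesis
      proof (cases "norm ?x \<le> R \<and> \<Delta> < \<eta>")
        case True
        then have "\<bar>g ?x - g ?y\<bar> < d/4" using \<eta> by (auto simp: \<Delta>_def dist_norm)
        then have "F w \<le> (d/4) powr q" unfolding F_def using q0 by (intro powr_mono2) auto
        then show ?thesis using nn1 nn2 nn3 unfolding B_def \<Delta>_def by linarith
      next
        case False
        have "norm ?y \<le> norm ?x + \<Delta>" unfolding \<Delta>_def
          using norm_triangle_ineq4[of ?x "?x - ?y"] by simp
        then have "\<bar>g ?x - g ?y\<bar> \<le> (2*C*norm ?x + 2*D) + C * \<Delta>"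
        proof -
          have "C * norm ?y \<le> C * (norm ?x + \<Delta>)" using \<open>norm ?y \<le> norm ?x + \<Delta>\<close> C by (intro mult_left_mono) auto
          then show ?thesis using gb[of ?x] gb[of ?y] D by (simp add: algebra_simps)
        qed
        then have "F w \<le> (2*C*norm ?x + 2*D + C * \<Delta>) powr q"
          unfolding F_def using q0 by (intro powr_mono2) auto
        also have "\<dots> \<le> 2 powr q * ((2*C*norm ?x + 2*D) powr q + (C * \<Delta>) powr q)"
          using C D q0 by (intro powr_add_le) (auto simp: \<Delta>_def)
        also have "\<dots> = V w + 2 powr q * C powr q * \<Delta> powr q"
          using C by (simp add: V_def powr_mult \<Delta>_def distrib_left)
        finally have F1: "F w \<le> V w + 2 powr q * C powr q * \<Delta> powr q" .
        have V1: "V w \<le> max (V w - real K) 0 + real K" by simp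
        have K1: "real K \<le> real K * indicator {w\<in>space M. R < norm (X w)} w + real K / \<eta> powr q * \<Delta> powr q"
        proof (cases "R < norm ?x")
          case True then show ?thesis using w by (simp add: \<Delta>_def)
        next
          case False
          then have "\<Delta> \<ge> \<eta>" using \<open>\<not> (norm ?x \<le> R \<and> \<Delta> < \<eta>)\<close> by auto
          then have "\<eta> powr q \<le> \<Delta> powr q" using \<eta> q0 by (intro powr_mono2) auto
          then have "1 \<le> \<Delta> powr q / \<eta> powr q" using \<eta> by simp
          then have "real K \<le> real K * (\<Delta> powr q / \<eta> powr q)"
            by (metis mult.right_neutral mult_left_mono of_nat_0_le_iff)
          then have "real K \<le> real K / \<eta> powr q * \<Delta> powr q" by simp
          moreover have "real K * indicator {w\<in>space M. R < norm (X w)} w \<ge> 0" by simp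
          ultimately show ?thesis by linarith
        qed
        have "(d/4) powr q \<ge> 0" by simp
        then show ?thesis using F1 V1 K1 unfolding B_def c_def \<Delta>_def distrib_right
          by linarith
      qed
    qed
    have Mi: "integrable M (\<lambda>w. max (V w - real K) 0)"
      by (rule Bochner_Integration.integrable_bound[OF Vi]) (use Vm Vnn in \<open>auto simp: max_def\<close>)
    have Ii: "integrable M (\<lambda>w. real K * indicator {w\<in>space M. R < norm (X w)} w)"
      using Rs by (intro integrable_mult_right integrable_real_indicator) (auto simp: less_top[symmetric])
    have Ci: "integrable M (\<lambda>w. c * norm (X w - Y w) powr q)"
      using \<Delta>i by (intro integrable_mult_right)
    have Bi: "integrable M B"
      unfolding B_def using Mi Ii Ci by simp
    have Fm: "F \<in> borel_measurable M" unfolding F_def using gm Xm Ym by measurable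
    have Fi: "integrable M F"
    proof (rule Bochner_Integration.integrable_bound[OF Bi Fm])
      show "AE w in M. norm (F w) \<le> norm (B w)"
        using FB by (auto simp: F_def intro!: AE_I2 order_trans[OF _ abs_ge_self])
    qed
    have "integral\<^sup>L M F \<le> integral\<^sup>L M B"
      using FB Fi Bi by (intro integral_mono) auto
    also have "integral\<^sup>L M B = (d/4) powr q + (\<integral>w. max (V w - real K) 0 \<partial>M)
        + real K * measure M {w\<in>space M. R < norm (X w)} + c * (\<integral>w. norm (X w - Y w) powr q \<partial>M)"
      unfolding B_def using Mi Ii Ci Rs
      by (simp add: integral_add integrable_add prob_space)
    also have "\<dots> < d powr q"
    proof -
      have a1: "(d/4) powr q \<le> t"
      proof -
        have "(4::real) powr 1 \<le> 4 powr q" using q by (intro powr_mono) auto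
        then have "(d/4) powr q = d powr q / 4 powr q" "4 \<le> (4::real) powr q" using d by (auto simp: powr_divide)
        moreover have "d powr q / 4 powr q \<le> d powr q / 4"
          using calculation(2) by (intro divide_left_mono) auto
        ultimately show ?thesis unfolding t_def by simp
      qed
      have a3: "real K * measure M {w\<in>space M. R < norm (X w)} \<le> t"
      proof -
        have "real K * measure M {w\<in>space M. R < norm (X w)} \<le> real K * (t / (real K + 1))"
          using R by (intro mult_left_mono) auto
        also have "\<dots> \<le> t" using t by (simp add: field_simps)
        finally show ?thesis .
      qed
      have a4: "c * (\<integral>w. norm (X w - Y w) powr q \<partial>M) \<le> t"
      proof -
        have "c * (\<integral>w. norm (X w - Y w) powr q \<partial>M) \<le> c * (t / L)"
          using I2 c by (intro mult_left_mono) auto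
        also have "\<dots> \<le> t" using t c unfolding L_def by (simp add: field_simps)
        finally show ?thesis .
      qed
      show ?thesis using a1 K a3 a4 unfolding t_def by linarith
    qed
    finally have IF: "integral\<^sup>L M F < d powr q" .
    have IFnn: "integral\<^sup>L M F \<ge> 0" unfolding F_def by (intro integral_nonneg_AE) auto
    have "(integral\<^sup>L M F) powr (1/q) < (d powr q) powr (1/q)"
      using IF IFnn q0 by (intro powr_less_mono2) auto
    also have "\<dots> = d" using q0 d by (simp add: powr_powr)
    finally have "(integral\<^sup>L M F) powr (1/q) < d" .
    then show "pi_q1 M q (g \<circ> X) (g \<circ> Y) < ereal d"
      using Fi unfolding pi_q1_def pi_q_def to_vec1_def F_def by (simp add: norm_vec1_diff)
  qed
qed

theorem proposition2:
  fixes M :: "'w measure"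
    and G :: "(real^'n \<Rightarrow> real) set"
    and \<rho> :: "('w \<Rightarrow> real) \<Rightarrow> ereal"
    and X :: "'w \<Rightarrow> real^'n"
  assumes "prob_space M"
    and "atomless M"
    and "G \<subseteq> borel_measurable borel"
  shows
    "(compatible \<rho> G (Linf M) (pi_inf M) \<and> X \<in> Linf M \<and>
      (\<exists>g\<in>optimal_set \<rho> G X. continuous_on UNIV g) \<and>
      (\<forall>U\<in>obj_dom G (Linf M). pcont_at (obj_dom G (Linf M)) (pi_inf1 M) \<rho> U)
      \<longrightarrow> robust \<rho> G (Linf M) (pi_inf M) X)
   \<and> (\<forall>q::real. 1 \<le> q \<longrightarrow>
      (compatible \<rho> G (Lq M q) (pi_q M q) \<and> X \<in> Lq M q \<and>
       (\<exists>g\<in>optimal_set \<rho> G X. continuous_on UNIV g \<and> linearly_growing g) \<and>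
       (\<forall>U\<in>obj_dom G (Lq M q). pcont_at (obj_dom G (Lq M q)) (pi_q1 M q) \<rho> U)
       \<longrightarrow> robust \<rho> G (Lq M q) (pi_q M q) X))
   \<and> (compatible \<rho> G (L0 M) (pi_W M) \<and> X \<in> L0 M \<and>
      (\<exists>g\<in>optimal_set \<rho> G X. continuous_on UNIV g) \<and>
      (\<forall>U\<in>obj_dom G (L0 M). pcont_at (obj_dom G (L0 M)) (pi_W1 M) \<rho> U)
      \<longrightarrow> robust \<rho> G (L0 M) (pi_W M) X)"
proof (intro conjI allI impI)
  have vc: "continuous_on UNIV (\<lambda>x. vec (g x) :: real^1)" if "continuous_on UNIV g" for g :: "real^'n \<Rightarrow> real"
    by (rule continuous_on_compose2[OF continuous_at_imp_continuous_on[OF ballI[OF continuous_vec]] that]) auto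
  {
    assume H: "compatible \<rho> G (Linf M) (pi_inf M) \<and> X \<in> Linf M \<and>
      (\<exists>g\<in>optimal_set \<rho> G X. continuous_on UNIV g) \<and>
      (\<forall>U\<in>obj_dom G (Linf M). pcont_at (obj_dom G (Linf M)) (pi_inf1 M) \<rho> U)"
    then obtain g where g: "g \<in> optimal_set \<rho> G X" "continuous_on UNIV g" by blast
    have XZ: "X \<in> Linf M" using H by blast
    have "g \<circ> X \<in> obj_dom G (Linf M)" using g XZ by (auto simp: obj_dom_def optimal_set_def)
    then have pc: "pcont_at (obj_dom G (Linf M)) (pi_inf1 M) \<rho> (g \<circ> X)" using H by blast
    show "robust \<rho> G (Linf M) (pi_inf M) X"
      by (rule robust_generic[OF g(1) XZ pc]) (rule cont_inf[OF assms(1) XZ g(2)])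
  }
  {
    fix q :: real assume q: "1 \<le> q"
    assume H: "compatible \<rho> G (Lq M q) (pi_q M q) \<and> X \<in> Lq M q \<and>
       (\<exists>g\<in>optimal_set \<rho> G X. continuous_on UNIV g \<and> linearly_growing g) \<and>
       (\<forall>U\<in>obj_dom G (Lq M q). pcont_at (obj_dom G (Lq M q)) (pi_q1 M q) \<rho> U)"
    then obtain g where g: "g \<in> optimal_set \<rho> G X" "continuous_on UNIV g" "linearly_growing g" by blast
    have XZ: "X \<in> Lq M q" using H by blast
    have "g \<circ> X \<in> obj_dom G (Lq M q)" using g XZ by (auto simp: obj_dom_def optimal_set_def)
    then have pc: "pcont_at (obj_dom G (Lq M q)) (pi_q1 M q) \<rho> (g \<circ> X)" using H by blast
    show "robust \<rho> G (Lq M q) (pi_q M q) X"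
      by (rule robust_generic[OF g(1) XZ pc]) (rule cont_q[OF assms(1) q XZ g(2) g(3)])
  }
  {
    assume H: "compatible \<rho> G (L0 M) (pi_W M) \<and> X \<in> L0 M \<and>
      (\<exists>g\<in>optimal_set \<rho> G X. continuous_on UNIV g) \<and>
      (\<forall>U\<in>obj_dom G (L0 M). pcont_at (obj_dom G (L0 M)) (pi_W1 M) \<rho> U)"
    then obtain g where g: "g \<in> optimal_set \<rho> G X" "continuous_on UNIV g" by blast
    have XZ: "X \<in> L0 M" using H by blast
    have "g \<circ> X \<in> obj_dom G (L0 M)" using g XZ by (auto simp: obj_dom_def optimal_set_def)
    then have pc: "pcont_at (obj_dom G (L0 M)) (pi_W1 M) \<rho> (g \<circ> X)" using H by blast
    show "robust \<rho> G (L0 M) (pi_W M) X"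
    proof (rule robust_generic[OF g(1) XZ pc])
      fix d :: real assume d: "d > 0"
      have Xm: "X \<in> borel_measurable M" using XZ by (simp add: L0_def)
      from cont_W_gen[OF assms(1) Xm vc[OF g(2)] d]
      show "\<exists>d'>0. \<forall>Y\<in>L0 M. pi_W M X Y < ereal d' \<longrightarrow> pi_W1 M (g \<circ> X) (g \<circ> Y) < ereal d"
        by (simp add: L0_def pi_W_def pi_W1_def to_vec1_def comp_def)
    qed
  }
qed

end
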